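(* Let $M\ge1$ and let $\mathcal B\subset[0,1]$ be finite, $b_0=\max\mathcal B$. Let $$\Pi=\Big\{\pi\in[0,1]^{\{0,\dots,M-1\}\times\mathcal B\times\mathcal B}:\ \pi((m,b),b')=0\ \forall b'>b,\ \ \sum_{b'\le b}\pi((m,b),b')=1\ \forall m,b\Big\}.$$ For $\pi\in\Pi$ define $q(\pi)=\bm q\in[0,1]^{M\times\mathcal B}$ by $q_1(b)=\pi((0,b_0),b)$ and $q_{m+1}(b)=\sum_{b'\in\mathcal B}q_m(b')\pi((m,b'),b)$ for $m\in[M-1]$, $b\in\mathcal B$. Let $\mathcal Q_\Pi=\{q(\pi):\pi\in\Pi\}$ and $$\mathcal Q=\Big\{\bm q\in[0,1]^{M\times\mathcal B}:\ \sum_{b\in\mathcal B}q_m(b)=1\ \forall m\in[M],\ \ \sum_{b\le b'}q_{m+1}(b)\ge\sum_{b\le b'}q_m(b)\ \forall b'\in\mathcal B,\ m\in[M-1]\Big\}.$$ Then $\mathcal Q_\Pi=\mathcal Q$.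
   Context: A policy $\pi$ describes random generation of a non-increasing bid vector: $b_1$ is drawn from $\pi((0,b_0),\cdot)$ and $b_{m+1}$ from $\pi((m,b_m),\cdot)$; $q(\pi)_m(b)$ is then the marginal probability that $b_m=b$. *)

theory Defs
  imports "HOL-Analysis.Analysis"
begin

text \<open>Only values with m < M, b, b' in B matter; to make set
 equality meaningful we require all elements to be zero outside the domain
 (extensional representation of [0,1]^(domain)).\<close>

definition Policies :: "nat \<Rightarrow> real set \<Rightarrow> (nat \<Rightarrow> real \<Rightarrow> real \<Rightarrow> real) set" where
  "Policies M B = {p.
     (\<forall>m b b'. \<not> (m < M \<and> b \<in> B \<and> b' \<in> B) \<longrightarrow> p m b b' = 0) \<and>
     (\<forall>m<M. \<forall>b\<in>B. \<forall>b'\<in>B. 0 \<le> p m b b' \<and> p m b b' \<le> 1) \<and>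
     (\<forall>m<M. \<forall>b\<in>B. \<forall>b'\<in>B. b' > b \<longrightarrow> p m b b' = 0) \<and>
     (\<forall>m<M. \<forall>b\<in>B. (\<Sum>b'\<in>{b'\<in>B. b' \<le> b}. p m b b') = 1)}"

text \<open>Unrestricted recursion: qrec n corresponds to q_(n+1).\<close>
fun qrec :: "real set \<Rightarrow> (nat \<Rightarrow> real \<Rightarrow> real \<Rightarrow> real) \<Rightarrow> nat \<Rightarrow> real \<Rightarrow> real" where
  "qrec B p 0 b = p 0 (Max B) b"
| "qrec B p (Suc n) b = (\<Sum>b'\<in>B. qrec B p n b' * p (Suc n) b' b)"

definition qpol :: "nat \<Rightarrow> real set \<Rightarrow> (nat \<Rightarrow> real \<Rightarrow> real \<Rightarrow> real) \<Rightarrow> nat \<Rightarrow> real \<Rightarrow> real" where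
  "qpol M B p m b = (if m \<in> {1..M} \<and> b \<in> B then qrec B p (m - 1) b else 0)"

definition QPi :: "nat \<Rightarrow> real set \<Rightarrow> (nat \<Rightarrow> real \<Rightarrow> real) set" where
  "QPi M B = qpol M B ` Policies M B"

definition Qset :: "nat \<Rightarrow> real set \<Rightarrow> (nat \<Rightarrow> real \<Rightarrow> real) set" where
  "Qset M B = {q.
     (\<forall>m b. \<not> (m \<in> {1..M} \<and> b \<in> B) \<longrightarrow> q m b = 0) \<and>
     (\<forall>m\<in>{1..M}. \<forall>b\<in>B. 0 \<le> q m b \<and> q m b \<le> 1) \<and>
     (\<forall>m\<in>{1..M}. (\<Sum>b\<in>B. q m b) = 1) \<and>
     (\<forall>m\<in>{1..M-1}. \<forall>b'\<in>B.
        (\<Sum>b\<in>{b\<in>B. b \<le> b'}. q (Suc m) b) \<ge> (\<Sum>b\<in>{b\<in>B. b \<le> b'}. q m b))}"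

end

theory Submission
  imports Defs
begin

definition KP :: "real set \<Rightarrow> (real \<Rightarrow> real) \<Rightarrow> (real \<Rightarrow> real) \<Rightarrow> (real \<Rightarrow> real \<Rightarrow> real) \<Rightarrow> bool" where
  "KP B f g K \<longleftrightarrow> (\<forall>x\<in>B. \<forall>y\<in>B. 0 \<le> K x y) \<and> (\<forall>x\<in>B. \<forall>y\<in>B. y > x \<longrightarrow> K x y = 0)
     \<and> (\<forall>x\<in>B. sum (K x) B = 1) \<and> (\<forall>y\<in>B. (\<Sum>x\<in>B. f x * K x y) = g y)"

lemma kernel_exists:
  fixes B :: "real set"
  assumes "finite B"
  shows "(\<forall>x\<in>B. 0 \<le> f x) \<Longrightarrow> (\<forall>x\<in>B. 0 \<le> g x) \<Longrightarrow> sum f B = sum g B \<Longrightarrow>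
    (\<forall>c\<in>B. sum f {x\<in>B. x \<le> c} \<le> sum g {x\<in>B. x \<le> c}) \<Longrightarrow> \<exists>K. KP B f g K"
  using assms
proof (induction B arbitrary: f g rule: finite_linorder_max_induct)
  case empty
  then show ?case by (auto simp: KP_def)
next
  case (insert t A)
  have tA: "t \<notin> A" using insert.hyps(2) by auto
  have sf: "sum f (insert t A) = f t + sum f A" and sg: "sum g (insert t A) = g t + sum g A"
    using tA insert.hyps(1) by auto
  define e where "e = f t - g t"
  show ?case
  proof (cases "A = {}")
    case True
    have "f t = g t" using insert.prems(3) True by simp
    then show ?thesis using True
      by (intro exI[of _ "\<lambda>x y. if x = y then 1 else 0"]) (auto simp: KP_def)
  next
    case False
    define t' where "t' = Max A"
    have t'A: "t' \<in> A" using False insert.hyps(1) by (simp add: t'_def)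
    have t'max: "\<forall>x\<in>A. x \<le> t'" using insert.hyps(1) by (simp add: t'_def)
    have setA: "{x\<in>insert t A. x \<le> t'} = A" using t'max t'A insert.hyps(2) by force
    have "sum f A \<le> sum g A" using insert.prems(4) t'A setA by force
    then have e0: "e \<ge> 0" using insert.prems(3) sf sg by (simp add: e_def)
    define f' where "f' x = f x + (if x = t' then e else 0)" for x
    have sf': "sum f' S = sum f S + (if t' \<in> S then e else 0)" if "finite S" for S
      using that by (simp add: f'_def sum.distrib sum.delta)
    have h1: "\<forall>x\<in>A. 0 \<le> f' x" using insert.prems(1) e0 by (simp add: f'_def)
    have h2: "\<forall>x\<in>A. 0 \<le> g x" using insert.prems(2) by simp
    have h3: "sum f' A = sum g A" using sf'[OF insert.hyps(1)] t'A insert.prems(3) sf sg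
      by (simp add: e_def)
    have h4: "\<forall>c\<in>A. sum f' {x\<in>A. x \<le> c} \<le> sum g {x\<in>A. x \<le> c}"
    proof
      fix c assume cA: "c \<in> A"
      show "sum f' {x\<in>A. x \<le> c} \<le> sum g {x\<in>A. x \<le> c}"
      proof (cases "c = t'")
        case True
        have "{x\<in>A. x \<le> c} = A" using True t'max by auto
        then show ?thesis using h3 by simp
      next
        case False
        then have cl: "c < t'" using t'max cA by force
        have fin: "finite {x\<in>A. x \<le> c}" using insert.hyps(1) by simp
        have "sum f' {x\<in>A. x \<le> c} = sum f {x\<in>A. x \<le> c}"
          using sf'[OF fin] cl by auto
        moreover have "{x\<in>insert t A. x \<le> c} = {x\<in>A. x \<le> c}"
          using insert.hyps(2) cA by force
        moreover have "sum f {x\<in>insert t A. x \<le> c} \<le> sum g {x\<in>insert t A. x \<le> c}"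
          using insert.prems(4) cA by blast
        ultimately show ?thesis by simp
      qed
    qed
    obtain K' where K': "KP A f' g K'" using insert.IH[OF h1 h2 h3 h4] by blast
    define K where "K x y = (if x = t then (if f t = 0 then (if y = t then 1 else 0)
        else (if y = t then g t / f t else e / f t * K' t' y))
        else (if y = t then 0 else K' x y))" for x y
    have ft: "f t \<ge> 0" "g t \<ge> 0" using insert.prems by auto
    have ft0: "f t = 0 \<Longrightarrow> g t = 0 \<and> e = 0" using e0 ft by (auto simp: e_def)
    have P1: "\<forall>x\<in>insert t A. \<forall>y\<in>insert t A. 0 \<le> K x y"
      using K' ft e0 t'A by (auto simp: K_def KP_def intro!: divide_nonneg_nonneg mult_nonneg_nonneg)
    have P2: "\<forall>x\<in>insert t A. \<forall>y\<in>insert t A. y > x \<longrightarrow> K x y = 0"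
      using K' insert.hyps(2) by (auto simp: K_def KP_def)
    have P3: "\<forall>x\<in>insert t A. sum (K x) (insert t A) = 1"
    proof
      fix x assume x: "x \<in> insert t A"
      have "sum (K x) (insert t A) = K x t + sum (K x) A" using tA insert.hyps(1) by simp
      also have "\<dots> = 1"
      proof (cases "x = t")
        case True
        show ?thesis
        proof (cases "f t = 0")
          case True
          then show ?thesis using \<open>x = t\<close> tA insert.hyps(1) by (simp add: K_def sum.delta)
        next
          case False
          have "sum (K x) A = e / f t * sum (K' t') A"
            using \<open>x = t\<close> False tA unfolding sum_distrib_left by (intro sum.cong) (auto simp: K_def)
          also have "\<dots> = e / f t" using K' t'A by (simp add: KP_def)
          finally have s: "sum (K x) A = e / f t" .
          have "K x t = g t / f t" using \<open>x = t\<close> False by (simp add: K_def)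
          then show ?thesis using False s by (simp add: e_def add_divide_distrib[symmetric])
        qed
      next
        case False
        then have "x \<in> A" using x by simp
        have "sum (K x) A = sum (K' x) A" using False tA by (auto simp: K_def intro!: sum.cong)
        then show ?thesis using K' \<open>x \<in> A\<close> False by (simp add: K_def KP_def)
      qed
      finally show "sum (K x) (insert t A) = 1" .
    qed
    have P4: "\<forall>y\<in>insert t A. (\<Sum>x\<in>insert t A. f x * K x y) = g y"
    proof
      fix y assume y: "y \<in> insert t A"
      have "(\<Sum>x\<in>insert t A. f x * K x y) = f t * K t y + (\<Sum>x\<in>A. f x * K x y)"
        using tA insert.hyps(1) by simp
      also have "\<dots> = g y"
      proof (cases "y = t")
        case True
        have "(\<Sum>x\<in>A. f x * K x y) = 0" using True tA by (auto simp: K_def intro!: sum.neutral)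
        then show ?thesis using True ft0 by (auto simp: K_def)
      next
        case False
        then have yA: "y \<in> A" using y by simp
        have a: "f t * K t y = e * K' t' y" using False ft0 by (auto simp: K_def)
        have b: "(\<Sum>x\<in>A. f x * K x y) = (\<Sum>x\<in>A. f x * K' x y)"
          using False tA by (auto simp: K_def intro!: sum.cong)
        have "(\<Sum>x\<in>A. f' x * K' x y) = (\<Sum>x\<in>A. f x * K' x y + (if x = t' then e * K' t' y else 0))"
          by (auto simp: f'_def algebra_simps intro!: sum.cong)
        also have "\<dots> = (\<Sum>x\<in>A. f x * K' x y) + e * K' t' y"
          using t'A insert.hyps(1) by (simp add: sum.distrib sum.delta)
        finally have "(\<Sum>x\<in>A. f x * K' x y) + e * K' t' y = g y"
          using K' yA by (simp add: KP_def)
        then show ?thesis using a b by simp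
      qed
      finally show "(\<Sum>x\<in>insert t A. f x * K x y) = g y" .
    qed
    show ?thesis using P1 P2 P3 P4 unfolding KP_def by blast
  qed
qed


lemma pol_rowsum:
  assumes p: "p \<in> Policies M B" and fin: "finite B" and m: "m < M" and b: "b \<in> B"
  shows "sum (p m b) B = 1"
proof -
  have "sum (p m b) B = (\<Sum>b'\<in>B. if b' \<le> b then p m b b' else 0)"
    using p m b by (intro sum.cong) (auto simp: Policies_def)
  also have "\<dots> = sum (p m b) {b'\<in>B. b' \<le> b}" using fin by (simp add: sum.inter_filter)
  also have "\<dots> = 1" using p m b by (simp add: Policies_def)
  finally show ?thesis .
qed

lemma pol_nonneg:
  assumes p: "p \<in> Policies M B" shows "0 \<le> p m b b'"
  using p unfolding Policies_def by (cases "m < M \<and> b \<in> B \<and> b' \<in> B") auto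

lemma qrec_props:
  assumes p: "p \<in> Policies M B" and fin: "finite B" and ne: "B \<noteq> {}" and n: "n < M"
  shows "(\<forall>b. 0 \<le> qrec B p n b) \<and> sum (qrec B p n) B = 1"
  using n
proof (induction n)
  case 0
  have "Max B \<in> B" using fin ne by simp
  then show ?case using pol_rowsum[OF p fin 0] pol_nonneg[OF p] by simp
next
  case (Suc n)
  then have IH: "\<forall>b. 0 \<le> qrec B p n b" "sum (qrec B p n) B = 1" by auto
  have "sum (qrec B p (Suc n)) B = (\<Sum>b\<in>B. \<Sum>b'\<in>B. qrec B p n b' * p (Suc n) b' b)" by simp
  also have "\<dots> = (\<Sum>b'\<in>B. qrec B p n b' * sum (p (Suc n) b') B)"
    by (subst sum.swap) (simp add: sum_distrib_left)
  also have "\<dots> = (\<Sum>b'\<in>B. qrec B p n b')"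
    using pol_rowsum[OF p fin Suc.prems] by simp
  finally have "sum (qrec B p (Suc n)) B = 1" using IH by simp
  moreover have "\<forall>b. 0 \<le> qrec B p (Suc n) b"
    using IH(1) pol_nonneg[OF p] by (simp add: sum_nonneg)
  ultimately show ?case by blast
qed

lemma qrec_cumul:
  assumes p: "p \<in> Policies M B" and fin: "finite B" and ne: "B \<noteq> {}" and k: "Suc k < M"
    and c: "c \<in> B"
  shows "sum (qrec B p k) {b\<in>B. b \<le> c} \<le> sum (qrec B p (Suc k)) {b\<in>B. b \<le> c}"
proof -
  let ?C = "{b\<in>B. b \<le> c}"
  have finC: "finite ?C" using fin by simp
  have q0: "\<forall>b. 0 \<le> qrec B p k b" using qrec_props[OF p fin ne] k by simp
  have inner: "sum (p (Suc k) b') ?C = 1" if b': "b' \<in> B" "b' \<le> c" for b'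
  proof -
    have "sum (p (Suc k) b') ?C = (\<Sum>b\<in>B. if b \<le> c then p (Suc k) b' b else 0)"
      using fin by (simp add: sum.inter_filter)
    also have "\<dots> = sum (p (Suc k) b') B"
      using p k b' by (intro sum.cong) (auto simp: Policies_def)
    also have "\<dots> = 1" using pol_rowsum[OF p fin k b'(1)] .
    finally show ?thesis .
  qed
  have "sum (qrec B p k) ?C = (\<Sum>b'\<in>B. if b' \<le> c then qrec B p k b' else 0)"
    using fin by (simp add: sum.inter_filter)
  also have "\<dots> \<le> (\<Sum>b'\<in>B. qrec B p k b' * sum (p (Suc k) b') ?C)"
  proof (rule sum_mono)
    fix b' assume "b' \<in> B"
    then show "(if b' \<le> c then qrec B p k b' else 0) \<le> qrec B p k b' * sum (p (Suc k) b') ?C"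
      using inner q0 pol_nonneg[OF p] by (auto intro!: mult_nonneg_nonneg sum_nonneg)
  qed
  also have "\<dots> = (\<Sum>b\<in>?C. \<Sum>b'\<in>B. qrec B p k b' * p (Suc k) b' b)"
    by (subst sum.swap) (simp add: sum_distrib_left)
  also have "\<dots> = sum (qrec B p (Suc k)) ?C" by simp
  finally show ?thesis .
qed

lemma forward:
  assumes p: "p \<in> Policies M B" and fin: "finite B" and ne: "B \<noteq> {}"
  shows "qpol M B p \<in> Qset M B"
proof -
  have A: "\<forall>m b. \<not> (m \<in> {1..M} \<and> b \<in> B) \<longrightarrow> qpol M B p m b = 0" by (simp add: qpol_def)
  have S: "\<forall>m\<in>{1..M}. (\<Sum>b\<in>B. qpol M B p m b) = 1"
  proof
    fix m assume m: "m \<in> {1..M}"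
    have "(\<Sum>b\<in>B. qpol M B p m b) = sum (qrec B p (m - 1)) B"
      using m by (intro sum.cong) (auto simp: qpol_def)
    then show "(\<Sum>b\<in>B. qpol M B p m b) = 1" using qrec_props[OF p fin ne, of "m - 1"] m by auto
  qed
  have N: "\<forall>m\<in>{1..M}. \<forall>b\<in>B. 0 \<le> qpol M B p m b \<and> qpol M B p m b \<le> 1"
  proof (intro ballI)
    fix m b assume m: "m \<in> {1..M}" and b: "b \<in> B"
    have pr: "(\<forall>b. 0 \<le> qrec B p (m - 1) b) \<and> sum (qrec B p (m - 1)) B = 1"
      using qrec_props[OF p fin ne, of "m - 1"] m by auto
    have "qrec B p (m - 1) b \<le> sum (qrec B p (m - 1)) B"
      using pr b fin by (intro member_le_sum) auto
    then show "0 \<le> qpol M B p m b \<and> qpol M B p m b \<le> 1" using pr m b by (simp add: qpol_def)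
  qed
  have C: "\<forall>m\<in>{1..M-1}. \<forall>b'\<in>B.
        (\<Sum>b\<in>{b\<in>B. b \<le> b'}. qpol M B p (Suc m) b) \<ge> (\<Sum>b\<in>{b\<in>B. b \<le> b'}. qpol M B p m b)"
  proof (intro ballI)
    fix m c assume m: "m \<in> {1..M-1}" and c: "c \<in> B"
    obtain k where k: "m = Suc k" using m by (cases m) auto
    have e1: "(\<Sum>b\<in>{b\<in>B. b \<le> c}. qpol M B p (Suc m) b) = sum (qrec B p (Suc k)) {b\<in>B. b \<le> c}"
      using m k by (intro sum.cong) (auto simp: qpol_def)
    have e2: "(\<Sum>b\<in>{b\<in>B. b \<le> c}. qpol M B p m b) = sum (qrec B p k) {b\<in>B. b \<le> c}"
      using m k by (intro sum.cong) (auto simp: qpol_def)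
    show "(\<Sum>b\<in>{b\<in>B. b \<le> c}. qpol M B p (Suc m) b) \<ge> (\<Sum>b\<in>{b\<in>B. b \<le> c}. qpol M B p m b)"
      unfolding e1 e2 using qrec_cumul[OF p fin ne _ c, of k] m k by auto
  qed
  show ?thesis unfolding Qset_def using A S N C by blast
qed

lemma filter_sum_one:
  fixes b :: real
  assumes fin: "finite B" and z: "\<forall>b'\<in>B. b' > b \<longrightarrow> h b' = 0" and s: "sum h B = 1"
  shows "sum h {b'\<in>B. b' \<le> b} = 1"
proof -
  have "sum h {b'\<in>B. b' \<le> b} = (\<Sum>b'\<in>B. if b' \<le> b then h b' else 0)"
    using fin by (simp add: sum.inter_filter)
  also have "\<dots> = sum h B"
  proof (rule sum.cong[OF refl])
    fix x assume "x \<in> B"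
    then show "(if x \<le> b then h x else 0) = h x" using z by (cases "x \<le> b") auto
  qed
  finally show ?thesis using s by simp
qed

lemma backward:
  assumes q: "q \<in> Qset M B" and fin: "finite B" and ne: "B \<noteq> {}" and M: "M \<ge> 1"
  shows "q \<in> QPi M B"
proof -
  have Q1: "\<forall>m b. \<not> (m \<in> {1..M} \<and> b \<in> B) \<longrightarrow> q m b = 0"
    and Q2: "\<forall>m\<in>{1..M}. \<forall>b\<in>B. 0 \<le> q m b \<and> q m b \<le> 1"
    and Q3: "\<forall>m\<in>{1..M}. (\<Sum>b\<in>B. q m b) = 1"
    and Q4: "\<forall>m\<in>{1..M-1}. \<forall>b'\<in>B.
        (\<Sum>b\<in>{b\<in>B. b \<le> b'}. q (Suc m) b) \<ge> (\<Sum>b\<in>{b\<in>B. b \<le> b'}. q m b)"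
    using q unfolding Qset_def by blast+
  have "\<forall>m\<in>{1..M-1}. \<exists>K. KP B (q m) (q (Suc m)) K"
  proof
    fix m assume m: "m \<in> {1..M-1}"
    then have m1: "m \<in> {1..M}" and m2: "Suc m \<in> {1..M}" by auto
    show "\<exists>K. KP B (q m) (q (Suc m)) K"
      by (rule kernel_exists[OF fin]) (use Q2 Q3 Q4 m m1 m2 in auto)
  qed
  then obtain Kf where Kf: "\<forall>m\<in>{1..M-1}. KP B (q m) (q (Suc m)) (Kf m)"
    by metis
  define p where "p m b b' = (if m < M \<and> b \<in> B \<and> b' \<in> B then
      (if m = 0 then (if b = Max B then q 1 b' else if b' = b then 1 else 0) else Kf m b b') else 0)"
    for m b b'
  have MB: "Max B \<in> B" using fin ne by simp
  have q1: "1 \<in> {1..M}" using M by simp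
  have rows: "sum (p m b) B = 1" if m: "m < M" and b: "b \<in> B" for m b
  proof (cases "m = 0")
    case True
    show ?thesis
    proof (cases "b = Max B")
      case True
      have "sum (p m b) B = sum (q 1) B" using \<open>m = 0\<close> True m b by (intro sum.cong) (auto simp: p_def)
      then show ?thesis using Q3 q1 by simp
    next
      case False
      have "sum (p m b) B = (\<Sum>b'\<in>B. if b' = b then 1 else 0)"
        using \<open>m = 0\<close> False m b by (intro sum.cong) (auto simp: p_def)
      then show ?thesis using b fin by (simp add: sum.delta)
    qed
  next
    case False
    then have "m \<in> {1..M-1}" using m by auto
    then have "sum (Kf m b) B = 1" using Kf b by (auto simp: KP_def)
    moreover have "sum (p m b) B = sum (Kf m b) B" using False m b by (intro sum.cong) (auto simp: p_def)
    ultimately show ?thesis by simp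
  qed
  have nonneg: "0 \<le> p m b b'" if m: "m < M" and b: "b \<in> B" and b': "b' \<in> B" for m b b'
  proof (cases "m = 0")
    case True then show ?thesis using Q2 q1 b' by (auto simp: p_def)
  next
    case False
    then have "m \<in> {1..M-1}" using m by auto
    then show ?thesis using Kf b b' False m by (auto simp: KP_def p_def)
  qed
  have upper: "\<forall>b'\<in>B. b' > b \<longrightarrow> p m b b' = 0" if m: "m < M" and b: "b \<in> B" for m b
  proof (cases "m = 0")
    case True then show ?thesis using fin by (auto simp: p_def dest: Max_ge[OF fin])
  next
    case False
    then have "m \<in> {1..M-1}" using m by auto
    then show ?thesis using Kf b False m by (auto simp: KP_def p_def)
  qed
  have pP: "p \<in> Policies M B"
    unfolding Policies_def
  proof (intro CollectI conjI allI impI ballI)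
    fix m b b' assume "\<not> (m < M \<and> b \<in> B \<and> b' \<in> B)"
    then show "p m b b' = 0" by (auto simp: p_def)
  next
    fix m b b' assume "m < M" "b \<in> B" "b' \<in> B"
    then show "0 \<le> p m b b'" using nonneg by blast
  next
    fix m b b' assume m: "m < M" and b: "b \<in> B" and b': "b' \<in> B"
    have "p m b b' \<le> sum (p m b) B"
      using fin b' nonneg[OF m b] by (intro member_le_sum) auto
    then show "p m b b' \<le> 1" using rows[OF m b] by simp
  next
    fix m b b' assume "m < M" "b \<in> B" "b' \<in> B" "b' > b"
    then show "p m b b' = 0" using upper by blast
  next
    fix m b assume m: "m < M" and b: "b \<in> B"
    show "(\<Sum>b'\<in>{b'\<in>B. b' \<le> b}. p m b b') = 1"
      using filter_sum_one[OF fin upper[OF m b] rows[OF m b]] .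
  qed
  have rec: "\<forall>b\<in>B. qrec B p n b = q (Suc n) b" if "n < M" for n
    using that
  proof (induction n)
    case 0
    then show ?case using MB by (auto simp: p_def)
  next
    case (Suc n)
    then have IH: "\<forall>b\<in>B. qrec B p n b = q (Suc n) b" by simp
    have mS: "Suc n \<in> {1..M-1}" using Suc.prems by auto
    show ?case
    proof
      fix b assume b: "b \<in> B"
      have "qrec B p (Suc n) b = (\<Sum>b'\<in>B. q (Suc n) b' * Kf (Suc n) b' b)"
        using IH b Suc.prems by (simp add: p_def cong: sum.cong)
      also have "\<dots> = q (Suc (Suc n)) b" using Kf mS b by (auto simp: KP_def)
      finally show "qrec B p (Suc n) b = q (Suc (Suc n)) b" .
    qed
  qed
  have "qpol M B p = q"
  proof (intro ext)
    fix m b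
    show "qpol M B p m b = q m b"
    proof (cases "m \<in> {1..M} \<and> b \<in> B")
      case True
      then have "qrec B p (m - 1) b = q (Suc (m - 1)) b" using rec[of "m - 1"] by auto
      then show ?thesis using True by (simp add: qpol_def)
    next
      case False
      have "q m b = 0" using False Q1 by blast
      moreover have "qpol M B p m b = 0" using False unfolding qpol_def by presburger
      ultimately show ?thesis by simp
    qed
  qed
  then show ?thesis using pP unfolding QPi_def by blast
qed

theorem lemma1:
  fixes M :: nat and B :: "real set"
  assumes "M \<ge> 1" and "finite B" and "B \<noteq> {}" and "B \<subseteq> {0..1}"
  shows "QPi M B = Qset M B"
proof
  show "QPi M B \<subseteq> Qset M B" using forward assms unfolding QPi_def by blast
  show "Qset M B \<subseteq> QPi M B" using backward assms by blast
qed

end
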